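(* The family of inequalities $$\sum_{k\in[n]}-p_{k0,1}+\sum_{k\in T}(p_{k1,0}-p_{k1,1})\le 0\ (\emptyset\ne T\subseteq\{0,\dots,n-2\}),\quad \sum_{k\in[n]}-p_{k1,0}+\sum_{k\in T}(p_{k0,1}-p_{k0,0})\le 0\ (\emptyset\ne T\subsetneq[n]),$$ $$\sum_{k\in[n]}-p_{k0,0}+\sum_{k\in T}(p_{k1,1}-p_{k1,0})\le 0\ (\emptyset\ne T\subseteq\{0,\dots,n-2\}),$$ which characterizes the observed laws compatible with the IV model when $\ell=2$, consists of exactly $2^{n+1}-4$ sharp inequalities: none of them can be removed, i.e. for each inequality of the family there exists an observed law $\mathcal P$ (with $\mathcal P(Z=0),\mathcal P(Z=1)>0$) satisfying all other inequalities of the family but violating that one.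
   Context: $D\in\{0,1\}$ treatment; $Y$ outcome with values $\gamma_0<\dots<\gamma_{n-1}$; instrument $Z\in\{0,1\}$; $[n]=\{0,\dots,n-1\}$; $p_{yd,z}=\mathcal P(Y=\gamma_y,D=d\mid Z=z)$ for an observed law $\mathcal P$ of $(Y,D,Z)$. The IV model: potential outcomes $Y^{(d,z)}$ and treatments $D^{(z)}$ with exclusion $Y^{(d,0)}=Y^{(d,1)}$ a.s. (written $Y^{(d)}$), random assignment $Z\perp(Y^{(0)},Y^{(1)},D^{(0)},D^{(1)})$, and consistency $Y=(1-D)Y^{(0)}+DY^{(1)}$, $D=\mathbb 1(Z=0)D^{(0)}+\mathbb 1(Z=1)D^{(1)}$; $\mathcal P$ is compatible if it is induced by such a full data law. *)

theory Defs
  imports Complex_Main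
begin

text \<open>An observed law of (Y,D,Z): a joint probability mass function q y d z
  = P(Y = gamma_y, D = d, Z = z) with y < n, d,z in {0,1}, and P(Z=0), P(Z=1) > 0.\<close>

definition observed_law :: "nat \<Rightarrow> (nat \<Rightarrow> nat \<Rightarrow> nat \<Rightarrow> real) \<Rightarrow> bool" where
  "observed_law n q \<longleftrightarrow>
     (\<forall>y d z. 0 \<le> q y d z) \<and>
     (\<forall>y d z. (y \<ge> n \<or> d > 1 \<or> z > 1) \<longrightarrow> q y d z = 0) \<and>
     (\<Sum>y<n. \<Sum>d<2. \<Sum>z<2. q y d z) = 1 \<and>
     (\<forall>z<2. 0 < (\<Sum>y<n. \<Sum>d<2. q y d z))"

definition probZ :: "nat \<Rightarrow> (nat \<Rightarrow> nat \<Rightarrow> nat \<Rightarrow> real) \<Rightarrow> nat \<Rightarrow> real" where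
  "probZ n q z = (\<Sum>y<n. \<Sum>d<2. q y d z)"

text \<open>p_{yd,z} = P(Y = gamma_y, D = d | Z = z)\<close>
definition condp :: "nat \<Rightarrow> (nat \<Rightarrow> nat \<Rightarrow> nat \<Rightarrow> real) \<Rightarrow> nat \<Rightarrow> nat \<Rightarrow> nat \<Rightarrow> real" where
  "condp n q y d z = q y d z / probZ n q z"

datatype ineq = Ineq1 "nat set" | Ineq2 "nat set" | Ineq3 "nat set"

text \<open>The index set of the family; {0,...,n-2} is written {..<n-1}.\<close>
definition family :: "nat \<Rightarrow> ineq set" where
  "family n =
     {Ineq1 T | T. T \<noteq> {} \<and> T \<subseteq> {..<n-1}} \<union>
     {Ineq2 T | T. T \<noteq> {} \<and> T \<subset> {..<n}} \<union>
     {Ineq3 T | T. T \<noteq> {} \<and> T \<subseteq> {..<n-1}}"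

text \<open>Left-hand side of each inequality (the inequality reads lhs \<le> 0),
  for given conditional probabilities p y d z = p_{yd,z}.\<close>
fun ineq_lhs :: "nat \<Rightarrow> ineq \<Rightarrow> (nat \<Rightarrow> nat \<Rightarrow> nat \<Rightarrow> real) \<Rightarrow> real" where
  "ineq_lhs n (Ineq1 T) p = (\<Sum>k<n. - p k 0 1) + (\<Sum>k\<in>T. p k 1 0 - p k 1 1)"
| "ineq_lhs n (Ineq2 T) p = (\<Sum>k<n. - p k 1 0) + (\<Sum>k\<in>T. p k 0 1 - p k 0 0)"
| "ineq_lhs n (Ineq3 T) p = (\<Sum>k<n. - p k 0 0) + (\<Sum>k\<in>T. p k 1 1 - p k 1 0)"

end

theory Submission imports Defs begin

lemma pm_bound:
  fixes g :: real
  assumes "finite T" "finite T0" "T \<noteq> T0" "g \<ge> 0"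
  shows "(\<Sum>k\<in>T. if k \<in> T0 then g else - g) \<le> g * (real (card T0) - 1)"
proof -
  have "(\<Sum>k\<in>T. if k \<in> T0 then g else - g) = g * card (T \<inter> T0) - g * card (T - T0)"
    using assms(1) by (simp add: sum.If_cases Diff_eq)
  moreover have "g * card (T \<inter> T0) - g * card (T - T0) \<le> g * (real (card T0) - 1)"
  proof (cases "T - T0 = {}")
    case True
    then have "T \<subset> T0" using assms(3) by blast
    then have "card T < card T0" using assms(2) psubset_card_mono by blast
    moreover have "T \<inter> T0 = T" using True by blast
    ultimately have "real (card T) + 1 \<le> real (card T0)" by simp
    have "card (T - T0) = 0" by (simp only: True card.empty)
    with \<open>real (card T) + 1 \<le> real (card T0)\<close> show ?thesis using assms(4) \<open>T \<inter> T0 = T\<close>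
      by (simp add: algebra_simps) (metis distrib_left mult_left_mono add.commute mult.right_neutral)
  next
    case False
    then have "card (T - T0) \<ge> 1" using assms(1) by (simp add: Suc_le_eq card_gt_0_iff)
    moreover have "card (T \<inter> T0) \<le> card T0" using assms(2) by (simp add: card_mono)
    ultimately show ?thesis using assms(4)
      by (smt (verit, ccfv_SIG) mult_left_mono of_nat_1 of_nat_le_iff right_diff_distrib')
  qed
  ultimately show ?thesis by simp
qed

definition mk :: "nat \<Rightarrow> (nat\<Rightarrow>real) \<Rightarrow> (nat\<Rightarrow>real) \<Rightarrow> (nat\<Rightarrow>real) \<Rightarrow> (nat\<Rightarrow>real) \<Rightarrow> nat \<Rightarrow> nat \<Rightarrow> nat \<Rightarrow> real" where
"mk n a b c e y d z = (if n \<le> y \<or> 1 < d \<or> 1 < z then 0 else if d = 0 then (if z = 0 then a y else c y) else (if z = 0 then b y else e y))"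

lemma sum2: "(\<Sum>d<(2::nat). f d) = f 0 + (f 1 :: real)"
  by (simp add: numeral_2_eq_2)

lemma witness:
  assumes nn: "\<forall>k<n. 0 \<le> a k \<and> 0 \<le> b k \<and> 0 \<le> c k \<and> 0 \<le> e k"
    and s0: "(\<Sum>k<n. a k + b k) = 1" and s1: "(\<Sum>k<n. c k + e k) = 1"
  shows "observed_law n (\<lambda>y d z. mk n a b c e y d z / 2) \<and> condp n (\<lambda>y d z. mk n a b c e y d z / 2) = mk n a b c e"
proof -
  let ?q = "\<lambda>y d z. mk n a b c e y d z / 2"
  have z0: "(\<Sum>y<n. \<Sum>d<2. ?q y d 0) = 1/2"
  proof -
    have "(\<Sum>y<n. \<Sum>d<2. ?q y d 0) = (\<Sum>y<n. (a y + b y) / 2)"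
      by (rule sum.cong) (auto simp: sum2 mk_def add_divide_distrib)
    also have "\<dots> = 1/2" using s0 by (simp add: sum_divide_distrib[symmetric])
    finally show ?thesis .
  qed
  have z1: "(\<Sum>y<n. \<Sum>d<2. ?q y d 1) = 1/2"
  proof -
    have "(\<Sum>y<n. \<Sum>d<2. ?q y d 1) = (\<Sum>y<n. (c y + e y) / 2)"
      by (rule sum.cong) (auto simp: sum2 mk_def add_divide_distrib)
    also have "\<dots> = 1/2" using s1 by (simp add: sum_divide_distrib[symmetric])
    finally show ?thesis .
  qed
  have "observed_law n ?q"
    unfolding observed_law_def
  proof (intro conjI allI impI)
    fix y d z show "0 \<le> ?q y d z" using nn by (auto simp: mk_def)
  next
    fix y d z :: nat assume "n \<le> y \<or> 1 < d \<or> 1 < z" then show "?q y d z = 0" by (auto simp: mk_def)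
  next
    have "(\<Sum>y<n. \<Sum>d<2. \<Sum>z<2. ?q y d z) = (\<Sum>y<n. \<Sum>d<2. ?q y d 0) + (\<Sum>y<n. \<Sum>d<2. ?q y d 1)"
      by (simp add: sum2 sum.distrib)
    then show "(\<Sum>y<n. \<Sum>d<2. \<Sum>z<2. ?q y d z) = 1" using z0 z1 by simp
  next
    fix z :: nat assume "z < 2"
    then have "z = 0 \<or> z = 1" by auto
    then show "0 < (\<Sum>y<n. \<Sum>d<2. ?q y d z)" using z0 z1 by auto
  qed
  moreover have "condp n ?q = mk n a b c e"
  proof (intro ext)
    fix y d z
    show "condp n ?q y d z = mk n a b c e y d z"
    proof (cases "z < 2")
      case True
      then have pz: "probZ n ?q z = 1/2" using z0 z1 unfolding probZ_def
        by (cases z) auto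
      show ?thesis unfolding condp_def pz by simp
    next
      case False
      then show ?thesis by (simp add: condp_def mk_def)
    qed
  qed
  ultimately show ?thesis by simp
qed

lemma lhs1: "T \<subseteq> {..<n} \<Longrightarrow> ineq_lhs n (Ineq1 T) (mk n a b c e) = - (\<Sum>k<n. c k) + (\<Sum>k\<in>T. b k - e k)"
  by (auto simp: mk_def sum_negf intro!: sum.cong)
lemma lhs2: "T \<subseteq> {..<n} \<Longrightarrow> ineq_lhs n (Ineq2 T) (mk n a b c e) = - (\<Sum>k<n. b k) + (\<Sum>k\<in>T. c k - a k)"
  by (auto simp: mk_def sum_negf intro!: sum.cong)
lemma lhs3: "T \<subseteq> {..<n} \<Longrightarrow> ineq_lhs n (Ineq3 T) (mk n a b c e) = - (\<Sum>k<n. a k) + (\<Sum>k\<in>T. e k - b k)"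
  by (auto simp: mk_def sum_negf intro!: sum.cong)

lemma sum_ind: "finite A \<Longrightarrow> S \<subseteq> A \<Longrightarrow> (\<Sum>k\<in>A. if k \<in> S then (g::real) else 0) = g * card S"
  by (simp add: sum.If_cases Int_absorb1)

lemma sum_pt: "(p::nat) < n \<Longrightarrow> (\<Sum>k<n. if k = p then (x::real) else 0) = x"
  by simp

lemma sum_le_all: "finite A \<Longrightarrow> T \<subseteq> A \<Longrightarrow> (\<And>k. k \<in> A \<Longrightarrow> 0 \<le> f k) \<Longrightarrow> (\<And>k. k \<in> T \<Longrightarrow> h k \<le> (f k::real)) \<Longrightarrow> sum h T \<le> sum f A"
proof -
  assume a: "finite A" "T \<subseteq> A" "\<And>k. k \<in> A \<Longrightarrow> 0 \<le> f k" "\<And>k. k \<in> T \<Longrightarrow> h k \<le> (f k::real)"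
  have "sum h T \<le> sum f T" using a(4) by (rule sum_mono)
  also have "\<dots> \<le> sum f A" using a(1,2,3) by (intro sum_mono2) auto
  finally show ?thesis .
qed

lemma cardT_bound:
  assumes "T \<subseteq> {..<n-1}" "n \<ge> 1" "(g::real) \<ge> 0"
  shows "(\<Sum>k\<in>T. g) \<le> g * (real n - 1)"
proof -
  have "card T \<le> n - 1" using card_mono[OF _ assms(1)] by simp
  then have "real (card T) \<le> real n - 1" using assms(2) by (simp add: of_nat_diff)
  then have "g * real (card T) \<le> g * (real n - 1)" using assms(3) by (rule mult_left_mono)
  then show ?thesis by (simp add: mult.commute)
qed

lemma case1:
  assumes T0: "T0 \<noteq> {}" "T0 \<subseteq> {..<n-1}"
  shows "\<exists>q. observed_law n q \<and> (\<forall>j\<in>family n. j \<noteq> Ineq1 T0 \<longrightarrow> ineq_lhs n j (condp n q) \<le> 0) \<and> ineq_lhs n (Ineq1 T0) (condp n q) > 0"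
proof -
  have fin: "finite T0" using T0 finite_subset by blast
  have n2: "n \<ge> 2" proof -
    obtain x where "x \<in> T0" using T0 by blast
    then have "x < n - 1" using T0 by auto
    then show ?thesis by simp
  qed
  define m where "m = real (card T0)"
  define g :: real where "g = 1/(2*n)"
  have gn: "g * n = 1/2" "g > 0" using n2 by (auto simp: g_def)
  have m1: "m \<ge> 1" using T0 fin by (simp add: m_def Suc_le_eq card_gt_0_iff)
  have cT: "card T0 \<le> n - 1" using card_mono[OF _ T0(2)] by simp
  then have mn: "m \<le> real n - 1" using n2 by (simp add: m_def)
  have gm: "g * m \<le> g * (real n - 1)" using mn gn by (simp add: mult_left_mono)
  have gm1: "g \<le> g * m" using m1 gn by simp
  define a where "a = (\<lambda>k::nat. if k = n-1 then 1 - m*g else 0)"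
  define b where "b = (\<lambda>k::nat. if k \<in> T0 then g else 0)"
  define c where "c = (\<lambda>k::nat. if k = n-1 then g*(m - 1/2) else 0)"
  define e1 where "e1 = (\<lambda>k::nat. if k \<in> {..<n-1} - T0 then g else 0)"
  define e2 where "e2 = (\<lambda>k::nat. if k = n-1 then 1 - g*(real n - 3/2) else 0)"
  define e where "e = (\<lambda>k. e1 k + e2 k)"
  have T0n: "T0 \<subseteq> {..<n}" using T0 by auto
  have sa: "(\<Sum>k<n. a k) = 1 - m*g" unfolding a_def using n2 by (intro sum_pt) auto
  have sb: "(\<Sum>k<n. b k) = g*m" unfolding b_def m_def using T0n by (simp add: sum_ind)
  have sc: "(\<Sum>k<n. c k) = g*(m - 1/2)" unfolding c_def using n2 by (intro sum_pt) auto
  have se1: "(\<Sum>k<n. e1 k) = g*(real n - 1 - m)"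
  proof -
    have "(\<Sum>k<n. e1 k) = g * card ({..<n-1} - T0)" unfolding e1_def by (rule sum_ind) auto
    also have "card ({..<n-1} - T0) = n - 1 - card T0" using T0 by (simp add: card_Diff_subset fin)
    finally show ?thesis using cT n2 by (simp add: m_def of_nat_diff)
  qed
  have se2: "(\<Sum>k<n. e2 k) = 1 - g*(real n - 3/2)" unfolding e2_def using n2 by (intro sum_pt) auto
  have se: "(\<Sum>k<n. e k) = g*(real n - 1 - m) + (1 - g*(real n - 3/2))"
    unfolding e_def using se1 se2 by (simp add: sum.distrib)
  have nn: "\<forall>k<n. 0 \<le> a k \<and> 0 \<le> b k \<and> 0 \<le> c k \<and> 0 \<le> e k"
    using gn gm m1 by (auto simp: a_def b_def c_def e_def e1_def e2_def algebra_simps)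
  have s0: "(\<Sum>k<n. a k + b k) = 1" using sa sb by (simp add: sum.distrib algebra_simps)
  have s1: "(\<Sum>k<n. c k + e k) = 1" using sc se by (simp add: sum.distrib algebra_simps)
  note W = witness[OF nn s0 s1]
  have bnd: "(\<Sum>k\<in>T. b k - e k) \<le> g * (m - 1)" if "T \<subseteq> {..<n-1}" "T \<noteq> T0" for T
  proof -
    have "(\<Sum>k\<in>T. b k - e k) = (\<Sum>k\<in>T. if k \<in> T0 then g else - g)"
      using that by (intro sum.cong) (auto simp: b_def e_def e1_def e2_def)
    also have "\<dots> \<le> g * (m - 1)" unfolding m_def
      using that fin gn by (intro pm_bound) (auto intro: finite_subset)
    finally show ?thesis .
  qed
  have "\<forall>j\<in>family n. j \<noteq> Ineq1 T0 \<longrightarrow> ineq_lhs n j (mk n a b c e) \<le> 0"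
  proof (intro ballI impI)
    fix j assume j: "j \<in> family n" "j \<noteq> Ineq1 T0"
    then consider (I1) T where "j = Ineq1 T" "T \<noteq> {}" "T \<subseteq> {..<n-1}" "T \<noteq> T0"
      | (I2) T where "j = Ineq2 T" "T \<noteq> {}" "T \<subset> {..<n}"
      | (I3) T where "j = Ineq3 T" "T \<noteq> {}" "T \<subseteq> {..<n-1}"
      unfolding family_def by blast
    then show "ineq_lhs n j (mk n a b c e) \<le> 0"
    proof cases
      case I1
      then have "T \<subseteq> {..<n}" by auto
      then show ?thesis using I1 bnd[OF I1(3,4)] sc lhs1[OF \<open>T \<subseteq> {..<n}\<close>, of a b c e] gn by (simp add: algebra_simps)
    next
      case I2
      then have T: "T \<subseteq> {..<n}" by auto
      have "(\<Sum>k\<in>T. c k - a k) \<le> (\<Sum>k<n. c k)"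
        using T nn by (intro sum_le_all) auto
      then show ?thesis using I2 T sb sc lhs2[OF T, of a b c e] gn by (simp add: algebra_simps)
    next
      case I3
      then have T: "T \<subseteq> {..<n}" by auto
      have "(\<Sum>k\<in>T. e k - b k) \<le> (\<Sum>k\<in>T. g)"
        using I3 nn gn by (intro sum_mono) (auto simp: e_def e1_def e2_def b_def)
      also have "\<dots> \<le> g * (real n - 1)" using I3 gn n2 by (intro cardT_bound) auto
      finally show ?thesis using I3 T sa lhs3[OF T, of a b c e] gn gm by (simp add: algebra_simps)
    qed
  qed
  moreover have "ineq_lhs n (Ineq1 T0) (mk n a b c e) > 0"
  proof -
    have "(\<Sum>k\<in>T0. b k - e k) = (\<Sum>k\<in>T0. g)"
      using T0 by (intro sum.cong) (auto simp: b_def e_def e1_def e2_def)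
    then show ?thesis using lhs1[OF T0n, of a b c e] sc gn by (simp add: m_def algebra_simps)
  qed
  ultimately show ?thesis using W by (intro exI[where x="\<lambda>y d z. mk n a b c e y d z / 2"]) simp
qed

lemma case3:
  assumes T0: "T0 \<noteq> {}" "T0 \<subseteq> {..<n-1}"
  shows "\<exists>q. observed_law n q \<and> (\<forall>j\<in>family n. j \<noteq> Ineq3 T0 \<longrightarrow> ineq_lhs n j (condp n q) \<le> 0) \<and> ineq_lhs n (Ineq3 T0) (condp n q) > 0"
proof -
  have fin: "finite T0" using T0 finite_subset by blast
  have n2: "n \<ge> 2"
  proof -
    obtain x where "x \<in> T0" using T0 by blast
    then have "x < n - 1" using T0 by auto
    then show ?thesis by simp
  qed
  define m where "m = real (card T0)"
  define g :: real where "g = 1/(2*n)"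
  have gn: "g * n = 1/2" "g > 0" using n2 by (auto simp: g_def)
  have m1: "m \<ge> 1" using T0 fin by (simp add: m_def Suc_le_eq card_gt_0_iff)
  have cT: "card T0 \<le> n - 1" using card_mono[OF _ T0(2)] by simp
  then have mn: "m \<le> real n - 1" using n2 by (simp add: m_def)
  have gm: "g * m \<le> g * (real n - 1)" using mn gn by (simp add: mult_left_mono)
  have gm1: "g \<le> g * m" using m1 gn by simp
  define c where "c = (\<lambda>k::nat. if k = n-1 then 1 - m*g else 0)"
  define e where "e = (\<lambda>k::nat. if k \<in> T0 then g else 0)"
  define a where "a = (\<lambda>k::nat. if k = n-1 then g*(m - 1/2) else 0)"
  define b1 where "b1 = (\<lambda>k::nat. if k \<in> {..<n-1} - T0 then g else 0)"
  define b2 where "b2 = (\<lambda>k::nat. if k = n-1 then 1 - g*(real n - 3/2) else 0)"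
  define b where "b = (\<lambda>k. b1 k + b2 k)"
  have T0n: "T0 \<subseteq> {..<n}" using T0 by auto
  have sc: "(\<Sum>k<n. c k) = 1 - m*g" unfolding c_def using n2 by (intro sum_pt) auto
  have se: "(\<Sum>k<n. e k) = g*m" unfolding e_def m_def using T0n by (simp add: sum_ind)
  have sa: "(\<Sum>k<n. a k) = g*(m - 1/2)" unfolding a_def using n2 by (intro sum_pt) auto
  have sb1: "(\<Sum>k<n. b1 k) = g*(real n - 1 - m)"
  proof -
    have "(\<Sum>k<n. b1 k) = g * card ({..<n-1} - T0)" unfolding b1_def by (rule sum_ind) auto
    also have "card ({..<n-1} - T0) = n - 1 - card T0" using T0 by (simp add: card_Diff_subset fin)
    finally show ?thesis using cT n2 by (simp add: m_def of_nat_diff)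
  qed
  have sb2: "(\<Sum>k<n. b2 k) = 1 - g*(real n - 3/2)" unfolding b2_def using n2 by (intro sum_pt) auto
  have sb: "(\<Sum>k<n. b k) = g*(real n - 1 - m) + (1 - g*(real n - 3/2))"
    unfolding b_def using sb1 sb2 by (simp add: sum.distrib)
  have nn: "\<forall>k<n. 0 \<le> a k \<and> 0 \<le> b k \<and> 0 \<le> c k \<and> 0 \<le> e k"
    using gn gm m1 by (auto simp: a_def b_def c_def e_def b1_def b2_def algebra_simps)
  have s0: "(\<Sum>k<n. a k + b k) = 1" using sa sb by (simp add: sum.distrib algebra_simps)
  have s1: "(\<Sum>k<n. c k + e k) = 1" using sc se by (simp add: sum.distrib algebra_simps)
  note W = witness[OF nn s0 s1]
  have bnd: "(\<Sum>k\<in>T. e k - b k) \<le> g * (m - 1)" if "T \<subseteq> {..<n-1}" "T \<noteq> T0" for T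
  proof -
    have "(\<Sum>k\<in>T. e k - b k) = (\<Sum>k\<in>T. if k \<in> T0 then g else - g)"
      using that by (intro sum.cong) (auto simp: b_def e_def b1_def b2_def)
    also have "\<dots> \<le> g * (m - 1)" unfolding m_def
      using that fin gn by (intro pm_bound) (auto intro: finite_subset)
    finally show ?thesis .
  qed
  have "\<forall>j\<in>family n. j \<noteq> Ineq3 T0 \<longrightarrow> ineq_lhs n j (mk n a b c e) \<le> 0"
  proof (intro ballI impI)
    fix j assume j: "j \<in> family n" "j \<noteq> Ineq3 T0"
    then consider (I1) T where "j = Ineq1 T" "T \<noteq> {}" "T \<subseteq> {..<n-1}"
      | (I2) T where "j = Ineq2 T" "T \<noteq> {}" "T \<subset> {..<n}"
      | (I3) T where "j = Ineq3 T" "T \<noteq> {}" "T \<subseteq> {..<n-1}" "T \<noteq> T0"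
      unfolding family_def by blast
    then show "ineq_lhs n j (mk n a b c e) \<le> 0"
    proof cases
      case I3
      then have "T \<subseteq> {..<n}" by auto
      then show ?thesis using I3 bnd[OF I3(3,4)] sa lhs3[OF \<open>T \<subseteq> {..<n}\<close>, of a b c e] gn by (simp add: algebra_simps)
    next
      case I2
      then have T: "T \<subseteq> {..<n}" by auto
      have "(\<Sum>k\<in>T. c k - a k) \<le> (\<Sum>k<n. c k)"
        using T nn by (intro sum_le_all) auto
      then show ?thesis using I2 T sb sc lhs2[OF T, of a b c e] gn by (simp add: algebra_simps)
    next
      case I1
      then have T: "T \<subseteq> {..<n}" by auto
      have "(\<Sum>k\<in>T. b k - e k) \<le> (\<Sum>k\<in>T. g)"
        using I1 nn gn by (intro sum_mono) (auto simp: e_def b1_def b2_def b_def)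
      also have "\<dots> \<le> g * (real n - 1)" using I1 gn n2 by (intro cardT_bound) auto
      finally show ?thesis using I1 T sc lhs1[OF T, of a b c e] gn gm by (simp add: algebra_simps)
    qed
  qed
  moreover have "ineq_lhs n (Ineq3 T0) (mk n a b c e) > 0"
  proof -
    have "(\<Sum>k\<in>T0. e k - b k) = (\<Sum>k\<in>T0. g)"
      using T0 by (intro sum.cong) (auto simp: b_def e_def b1_def b2_def)
    then show ?thesis using lhs3[OF T0n, of a b c e] sa gn by (simp add: m_def algebra_simps)
  qed
  ultimately show ?thesis using W by (intro exI[where x="\<lambda>y d z. mk n a b c e y d z / 2"]) simp
qed

lemma case2:
  assumes T0: "T0 \<noteq> {}" "T0 \<subset> {..<n}"
  shows "\<exists>q. observed_law n q \<and> (\<forall>j\<in>family n. j \<noteq> Ineq2 T0 \<longrightarrow> ineq_lhs n j (condp n q) \<le> 0) \<and> ineq_lhs n (Ineq2 T0) (condp n q) > 0"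
proof -
  have fin: "finite T0" using T0 finite_subset by blast
  obtain p where p: "p < n" "p \<notin> T0" using T0 by blast
  have n1: "n \<ge> 1" using p by simp
  define m where "m = real (card T0)"
  define g :: real where "g = 1/(2*n)"
  have gn: "g * n = 1/2" "g > 0" using n1 by (auto simp: g_def)
  have m1: "m \<ge> 1" using T0 fin by (simp add: m_def Suc_le_eq card_gt_0_iff)
  have cT: "card T0 < n" using psubset_card_mono[OF _ T0(2)] by simp
  then have mn: "m \<le> real n - 1" by (simp add: m_def)
  have gm: "g * m \<le> g * (real n - 1)" using mn gn by (simp add: mult_left_mono)
  have gm1: "g \<le> g * m" using m1 gn by simp
  have ga2: "g*(real n - 1/2) \<le> 1" using gn by (simp add: right_diff_distrib)
  define a1 where "a1 = (\<lambda>k::nat. if k \<in> {..<n} - T0 then g else 0)"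
  define a2 where "a2 = (\<lambda>k::nat. if k = p then 1 - g*(real n - 1/2) else 0)"
  define a where "a = (\<lambda>k. a1 k + a2 k)"
  define b where "b = (\<lambda>k::nat. if k = p then g*(m - 1/2) else 0)"
  define c where "c = (\<lambda>k::nat. if k \<in> T0 then g else 0)"
  define e where "e = (\<lambda>k::nat. if k = p then 1 - m*g else 0)"
  have T0n: "T0 \<subseteq> {..<n}" using T0 by auto
  have se: "(\<Sum>k<n. e k) = 1 - m*g" unfolding e_def using p by (intro sum_pt) auto
  have sc: "(\<Sum>k<n. c k) = g*m" unfolding c_def m_def using T0n by (simp add: sum_ind)
  have sb: "(\<Sum>k<n. b k) = g*(m - 1/2)" unfolding b_def using p by (intro sum_pt) auto
  have sa1: "(\<Sum>k<n. a1 k) = g*(real n - m)"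
  proof -
    have "(\<Sum>k<n. a1 k) = g * card ({..<n} - T0)" unfolding a1_def by (rule sum_ind) auto
    also have "card ({..<n} - T0) = n - card T0" using T0n by (simp add: card_Diff_subset fin)
    finally show ?thesis using cT by (simp add: m_def of_nat_diff)
  qed
  have sa2: "(\<Sum>k<n. a2 k) = 1 - g*(real n - 1/2)" unfolding a2_def using p by (intro sum_pt) auto
  have sa: "(\<Sum>k<n. a k) = g*(real n - m) + (1 - g*(real n - 1/2))"
    unfolding a_def using sa1 sa2 by (simp add: sum.distrib)
  have nn: "\<forall>k<n. 0 \<le> a k \<and> 0 \<le> b k \<and> 0 \<le> c k \<and> 0 \<le> e k"
    using gn gm m1 by (auto simp: a_def b_def c_def e_def a1_def a2_def algebra_simps)
  have s0: "(\<Sum>k<n. a k + b k) = 1" using sa sb by (simp add: sum.distrib algebra_simps)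
  have s1: "(\<Sum>k<n. c k + e k) = 1" using sc se by (simp add: sum.distrib algebra_simps)
  note W = witness[OF nn s0 s1]
  have bnd: "(\<Sum>k\<in>T. c k - a k) \<le> g * (m - 1)" if "T \<subseteq> {..<n}" "T \<noteq> T0" for T
  proof -
    have "(\<Sum>k\<in>T. c k - a k) \<le> (\<Sum>k\<in>T. if k \<in> T0 then g else - g)"
      using that gn ga2 by (intro sum_mono) (auto simp: a_def c_def a1_def a2_def)
    also have "\<dots> \<le> g * (m - 1)" unfolding m_def
      using that fin gn by (intro pm_bound) (auto intro: finite_subset)
    finally show ?thesis .
  qed
  have "\<forall>j\<in>family n. j \<noteq> Ineq2 T0 \<longrightarrow> ineq_lhs n j (mk n a b c e) \<le> 0"
  proof (intro ballI impI)
    fix j assume j: "j \<in> family n" "j \<noteq> Ineq2 T0"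
    then consider (I1) T where "j = Ineq1 T" "T \<noteq> {}" "T \<subseteq> {..<n-1}"
      | (I2) T where "j = Ineq2 T" "T \<noteq> {}" "T \<subset> {..<n}" "T \<noteq> T0"
      | (I3) T where "j = Ineq3 T" "T \<noteq> {}" "T \<subseteq> {..<n-1}"
      unfolding family_def by blast
    then show "ineq_lhs n j (mk n a b c e) \<le> 0"
    proof cases
      case I2
      then have T: "T \<subseteq> {..<n}" by auto
      then show ?thesis using I2 bnd[OF T I2(4)] sb lhs2[OF T, of a b c e] gn by (simp add: algebra_simps)
    next
      case I1
      then have T: "T \<subseteq> {..<n}" by auto
      have "(\<Sum>k\<in>T. b k - e k) \<le> (\<Sum>k<n. b k)"
        using T nn by (intro sum_le_all) auto
      then show ?thesis using I1 T sb sc lhs1[OF T, of a b c e] gn by (simp add: algebra_simps)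
    next
      case I3
      then have T: "T \<subseteq> {..<n}" by auto
      have "(\<Sum>k\<in>T. e k - b k) \<le> (\<Sum>k<n. e k)"
        using T nn by (intro sum_le_all) auto
      then show ?thesis using I3 T sa se lhs3[OF T, of a b c e] gn by (simp add: algebra_simps)
    qed
  qed
  moreover have "ineq_lhs n (Ineq2 T0) (mk n a b c e) > 0"
  proof -
    have "(\<Sum>k\<in>T0. c k - a k) = (\<Sum>k\<in>T0. g)"
      using T0 p by (intro sum.cong) (auto simp: a_def c_def a1_def a2_def)
    then show ?thesis using lhs2[OF T0n, of a b c e] sb gn by (simp add: m_def algebra_simps)
  qed
  ultimately show ?thesis using W by (intro exI[where x="\<lambda>y d z. mk n a b c e y d z / 2"]) simp
qed


lemma card_ne: "finite S \<Longrightarrow> card {T. T \<noteq> {} \<and> T \<subseteq> S} = 2 ^ card S - 1"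
proof -
  assume f: "finite S"
  have "{T. T \<noteq> {} \<and> T \<subseteq> S} = Pow S - {{}}" by auto
  then show ?thesis using f by (simp add: card_Diff_singleton card_Pow)
qed

lemma card_ne2: "finite S \<Longrightarrow> S \<noteq> {} \<Longrightarrow> card {T. T \<noteq> {} \<and> T \<subset> S} = 2 ^ card S - 2"
proof -
  assume f: "finite S" "S \<noteq> {}"
  have "{T. T \<noteq> {} \<and> T \<subset> S} = (Pow S - {{}}) - {S}" by auto
  moreover have "S \<in> Pow S - {{}}" using f by auto
  ultimately show ?thesis using f by (simp add: card_Diff_singleton card_Pow diff_diff_add)
qed

lemma card_family: "n \<ge> 1 \<Longrightarrow> int (card (family n)) = 2 ^ (n + 1) - 4"
proof -
  assume n: "n \<ge> 1"
  define A1 where "A1 = {T. T \<noteq> {} \<and> T \<subseteq> {..<n-1}}"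
  define A2 where "A2 = {T. T \<noteq> {} \<and> T \<subset> {..<n}}"
  have fam: "family n = (Ineq1 ` A1 \<union> Ineq2 ` A2) \<union> Ineq3 ` A1"
    unfolding family_def A1_def A2_def by blast
  have fA1: "finite A1" unfolding A1_def by (rule finite_subset[of _ "Pow {..<n-1}"]) auto
  have fA2: "finite A2" unfolding A2_def by (rule finite_subset[of _ "Pow {..<n}"]) auto
  have c1: "card A1 = 2 ^ (n-1) - 1" unfolding A1_def by (simp add: card_ne)
  have "(0::nat) \<in> {..<n}" using n by simp
  then have ne: "{..<n} \<noteq> {}" by blast
  have c2: "card A2 = 2 ^ n - 2" unfolding A2_def using card_ne2[OF _ ne] by simp
  have "card (family n) = card (Ineq1 ` A1 \<union> Ineq2 ` A2) + card (Ineq3 ` A1)"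
    unfolding fam using fA1 fA2 by (intro card_Un_disjoint) auto
  also have "card (Ineq1 ` A1 \<union> Ineq2 ` A2) = card (Ineq1 ` A1) + card (Ineq2 ` A2)"
    using fA1 fA2 by (intro card_Un_disjoint) auto
  also have "card (Ineq1 ` A1) = card A1" by (rule card_image) (simp add: inj_on_def)
  also have "card (Ineq2 ` A2) = card A2" by (rule card_image) (simp add: inj_on_def)
  also have "card (Ineq3 ` A1) = card A1" by (rule card_image) (simp add: inj_on_def)
  finally have cf: "card (family n) = card A1 + card A2 + card A1" by simp
  obtain k where k: "n = Suc k" using n by (cases n) auto
  have p1: "(1::nat) \<le> 2 ^ k" by simp
  have p2: "(2::nat) \<le> 2 ^ Suc k" by simp
  have p4: "(4::nat) \<le> 4 * 2 ^ k" by simp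
  have cn: "card (family n) = 4 * 2 ^ k - 4" using cf c1 c2 p1 k by simp
  have "int (card (family n)) = int (4 * 2 ^ k) - 4" unfolding cn using p4 by (simp add: of_nat_diff)
  also have "\<dots> = 2 ^ (n + 1) - 4" using k by simp
  finally show ?thesis .
qed

theorem corollary3:
  fixes n :: nat
  assumes "n \<ge> 1"
  shows "int (card (family n)) = 2 ^ (n + 1) - 4 \<and>
         (\<forall>i \<in> family n. \<exists>q. observed_law n q \<and>
             (\<forall>j \<in> family n. j \<noteq> i \<longrightarrow> ineq_lhs n j (condp n q) \<le> 0) \<and>
             ineq_lhs n i (condp n q) > 0)"
proof (intro conjI ballI)
  show "int (card (family n)) = 2 ^ (n + 1) - 4" using assms by (rule card_family)
next
  fix i assume "i \<in> family n"
  then consider (I1) T where "i = Ineq1 T" "T \<noteq> {}" "T \<subseteq> {..<n-1}"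
      | (I2) T where "i = Ineq2 T" "T \<noteq> {}" "T \<subset> {..<n}"
      | (I3) T where "i = Ineq3 T" "T \<noteq> {}" "T \<subseteq> {..<n-1}"
      unfolding family_def by blast
  then show "\<exists>q. observed_law n q \<and>
             (\<forall>j \<in> family n. j \<noteq> i \<longrightarrow> ineq_lhs n j (condp n q) \<le> 0) \<and>
             ineq_lhs n i (condp n q) > 0"
  proof cases
    case I1 then show ?thesis using case1[OF I1(2,3)] by simp
  next
    case I2 then show ?thesis using case2[OF I2(2,3)] by simp
  next
    case I3 then show ?thesis using case3[OF I3(2,3)] by simp
  qed
qed

end
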